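(* For every formula $\delta\in\mathcal{L}(\Rightarrow)$: (1) $\delta^\dagger\in\mathcal{L}$; and (2) for every model $\mathcal{M}=\langle W,V\rangle$, every $w\in W$ and every $X\subseteq W$, $\mathcal{M},w,X\vDash\delta$ if and only if $\mathcal{M},w,X\vDash\delta^\dagger$, where $\vDash$ is the Kolodny–MacFarlane semantics.
   Context: $\mathcal{L}(\Rightarrow)$: $\varphi::= p\mid \neg\varphi\mid (\varphi\wedge\varphi)\mid \Box\varphi \mid (\varphi\Rightarrow\varphi)$ over a fixed set of propositional variables; $\vee,\to,\bot$ as usual, $\Diamond\varphi:=\neg\Box\neg\varphi$; $\mathcal{L}$ is the $\Rightarrow$-free fragment; nonmodal formulas are those of $\mathcal{L}$ without $\Box$. Models $\mathcal{M}=\langle W,V\rangle$: $W$ nonempty, $V(p)\subseteq W$. Kolodny–MacFarlane semantics at $\mathcal{M},w,X$ ($w\in W$, $X\subseteq W$): $p$ true iff $w\in V(p)$; $\neg,\wedge$ Boolean; $\Box\varphi$ true iff $\varphi$ is true at $\mathcal{M},v,X$ for all $v\in X$; $\varphi\Rightarrow\psi$ true iff $\mathcal{M},w,X'\vDash\Box\psi$ for every $X'$ with (i) $X'\subseteq X$, (ii) $X'\subseteq\llbracket\varphi\rrbracket^{\mathcal{M},X'}$, (iii) no $X''$ satisfying (i),(ii) has $X'\subsetneq X''$; here $\llbracket\varphi\rrbracket^{\mathcal{M},Y}=\{v\in Y\mid \mathcal{M},v,Y\vDash\varphi\}$. Every $\chi\in\mathcal{L}$ is provably equivalent in the modal logic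 K45 to a formula in disjunctive normal form $\bigvee_{i}(\pi^i\wedge\Box\beta^i\wedge\Diamond\beta^i_1\wedge\dots\wedge\Diamond\beta^i_{m_i})$ with all $\pi^i,\beta^i,\beta^i_j$ nonmodal; $\chi^{NF}$ denotes a fixed such formula for $\chi$. The map $(\cdot)^*$: given $\lambda=\Theta\Rightarrow\Omega$ with $\Theta=\bigvee_{i\in I}\theta_i$, $\Omega=\bigvee_{j\in J}\omega_j$ ($I,J$ finite), $\theta_i=\varphi_i\wedge\Box\psi_i\wedge\bigwedge_{n\in D_i}\Diamond\chi_n$, $\omega_j=\alpha_j\wedge\Box\beta_j\wedge\bigwedge_{m\in E_j}\Diamond\gamma_m$, all of $\varphi_i,\psi_i,\chi_n,\alpha_j,\beta_j,\gamma_m$ nonmodal, define for $K\subseteq I$: $\mathtt{info}_K:=(\bigvee_{k\in K}\varphi_k)\wedge\bigwedge_{k\in K}\psi_k$; $\mathtt{good}_K:=\bigwedge_{k\in K}\bigwedge_{n\in D_k}\Diamond(\mathtt{info}_K\wedge\chi_n)$; $\mathtt{max}_K:=\mathtt{good}_K\wedge\bigwedge_{L\subseteq I}\big((\Box(\mathtt{info}_K\to\mathtt{info}_L)\wedge\Diamond(\neg\mathtt{info}_K\wedge\mathtt{info}_L))\to\neg\mathtt{good}_L\big)$; for $S\subseteq J$: $\mathtt{state}_S:=\bigwedge_{s\in S}\alpha_s\wedge\bigwedge_{s\in J\setminus S}\neg\alpha_s$; and $\lambda^*:=\bigwedge_{K\subseteq I}\Big(\mathtt{max}_K\to\Box\big(\mathtt{info}_K\to\bigwedge_{S\subseteq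 J}(\mathtt{state}_S\to\bigvee_{s\in S}(\Box(\mathtt{info}_K\to\beta_s)\wedge\bigwedge_{m\in E_s}\Diamond(\mathtt{info}_K\wedge\gamma_m)))\big)\Big)$ (empty disjunction is $\bot$, empty conjunction is $\top$). The translation $(\cdot)^\dagger$: $p^\dagger=p$; $(\neg\varphi)^\dagger=\neg\varphi^\dagger$; $(\varphi\wedge\psi)^\dagger=\varphi^\dagger\wedge\psi^\dagger$; $(\Box\varphi)^\dagger=\Box\varphi^\dagger$; $(\varphi\Rightarrow\psi)^\dagger=\big((\varphi^\dagger)^{NF}\Rightarrow(\psi^\dagger)^{NF}\big)^*$. *)

theory Defs
  imports Main
begin

datatype 'p fm = Atom 'p | Neg "'p fm" | Conj "'p fm" "'p fm" | Box "'p fm" | Cond "'p fm" "'p fm"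

definition Imp :: "'p fm \<Rightarrow> 'p fm \<Rightarrow> 'p fm" where
  "Imp a b = Neg (Conj a (Neg b))"
definition Or :: "'p fm \<Rightarrow> 'p fm \<Rightarrow> 'p fm" where
  "Or a b = Neg (Conj (Neg a) (Neg b))"
definition Iff :: "'p fm \<Rightarrow> 'p fm \<Rightarrow> 'p fm" where
  "Iff a b = Conj (Imp a b) (Imp b a)"
definition Dia :: "'p fm \<Rightarrow> 'p fm" where
  "Dia a = Neg (Box (Neg a))"
definition Bot :: "'p fm" where
  "Bot = Conj (Atom undefined) (Neg (Atom undefined))"
definition Top :: "'p fm" where
  "Top = Neg Bot"

fun bigconj :: "'p fm list \<Rightarrow> 'p fm" where
  "bigconj [] = Top"
| "bigconj [a] = a"
| "bigconj (a # as) = Conj a (bigconj as)"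

fun bigdisj :: "'p fm list \<Rightarrow> 'p fm" where
  "bigdisj [] = Bot"
| "bigdisj [a] = a"
| "bigdisj (a # as) = Or a (bigdisj as)"

primrec in_L :: "'p fm \<Rightarrow> bool" where
  "in_L (Atom p) = True"
| "in_L (Neg a) = in_L a"
| "in_L (Conj a b) = (in_L a \<and> in_L b)"
| "in_L (Box a) = in_L a"
| "in_L (Cond a b) = False"

primrec nonmodal :: "'p fm \<Rightarrow> bool" where
  "nonmodal (Atom p) = True"
| "nonmodal (Neg a) = nonmodal a"
| "nonmodal (Conj a b) = (nonmodal a \<and> nonmodal b)"
| "nonmodal (Box a) = False"
| "nonmodal (Cond a b) = False"

text \<open>A model is a pair (W, V); the world set W only constrains w and X in the theorem.
  sat V w X phi means M, w, X satisfies phi.\<close>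
primrec sat :: "('p \<Rightarrow> 'w set) \<Rightarrow> 'w \<Rightarrow> 'w set \<Rightarrow> 'p fm \<Rightarrow> bool" where
  "sat V w X (Atom p) = (w \<in> V p)"
| "sat V w X (Neg a) = (\<not> sat V w X a)"
| "sat V w X (Conj a b) = (sat V w X a \<and> sat V w X b)"
| "sat V w X (Box a) = (\<forall>v\<in>X. sat V v X a)"
| "sat V w X (Cond a b) =
     (\<forall>X'. (X' \<subseteq> X \<and> X' \<subseteq> {v \<in> X'. sat V v X' a}
            \<and> \<not> (\<exists>X''. X'' \<subseteq> X \<and> X'' \<subseteq> {v \<in> X''. sat V v X'' a} \<and> X' \<subset> X''))
          \<longrightarrow> (\<forall>v\<in>X'. sat V v X' b))"

primrec peval :: "('p fm \<Rightarrow> bool) \<Rightarrow> 'p fm \<Rightarrow> bool" where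
  "peval g (Atom p) = g (Atom p)"
| "peval g (Neg a) = (\<not> peval g a)"
| "peval g (Conj a b) = (peval g a \<and> peval g b)"
| "peval g (Box a) = g (Box a)"
| "peval g (Cond a b) = g (Cond a b)"

definition taut :: "'p fm \<Rightarrow> bool" where
  "taut a = (\<forall>g. peval g a)"

inductive K45 :: "'p fm \<Rightarrow> bool" where
  Taut: "in_L a \<Longrightarrow> taut a \<Longrightarrow> K45 a"
| AxK: "in_L a \<Longrightarrow> in_L b \<Longrightarrow> K45 (Imp (Box (Imp a b)) (Imp (Box a) (Box b)))"
| Ax4: "in_L a \<Longrightarrow> K45 (Imp (Box a) (Box (Box a)))"
| Ax5: "in_L a \<Longrightarrow> K45 (Imp (Dia a) (Box (Dia a)))"
| MP: "K45 a \<Longrightarrow> K45 (Imp a b) \<Longrightarrow> K45 b"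
| Nec: "K45 a \<Longrightarrow> K45 (Box a)"

text \<open>A DNF is a list of disjuncts (pi, beta, [beta_1,...,beta_m]) standing for
  pi \<and> Box beta \<and> Dia beta_1 \<and> ... \<and> Dia beta_m.\<close>
type_synonym 'p dnf = "('p fm \<times> 'p fm \<times> 'p fm list) list"

definition disjunct_fm :: "'p fm \<times> 'p fm \<times> 'p fm list \<Rightarrow> 'p fm" where
  "disjunct_fm d = (case d of (pi, beta, bs) \<Rightarrow>
      Conj pi (Conj (Box beta) (bigconj (map Dia bs))))"

definition dnf_fm :: "'p dnf \<Rightarrow> 'p fm" where
  "dnf_fm ds = bigdisj (map disjunct_fm ds)"

definition dnf_nonmodal :: "'p dnf \<Rightarrow> bool" where
  "dnf_nonmodal ds = (\<forall>(pi, beta, bs) \<in> set ds.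
      nonmodal pi \<and> nonmodal beta \<and> (\<forall>b\<in>set bs. nonmodal b))"

definition is_NF :: "('p fm \<Rightarrow> 'p dnf) \<Rightarrow> bool" where
  "is_NF nf = (\<forall>chi. in_L chi \<longrightarrow> dnf_nonmodal (nf chi) \<and> K45 (Iff chi (dnf_fm (nf chi))))"

text \<open>Index subsets K \<subseteq> I are represented by sublists (subseqs) of [0..<length].\<close>

definition info :: "'p dnf \<Rightarrow> nat list \<Rightarrow> 'p fm" where
  "info ts K = Conj (bigdisj (map (\<lambda>k. fst (ts ! k)) K))
                    (bigconj (map (\<lambda>k. fst (snd (ts ! k))) K))"

definition good :: "'p dnf \<Rightarrow> nat list \<Rightarrow> 'p fm" where
  "good ts K = bigconj (concat (map (\<lambda>k. map (\<lambda>c. Dia (Conj (info ts K) c)) (snd (snd (ts ! k)))) K))"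

definition maxf :: "'p dnf \<Rightarrow> nat list \<Rightarrow> 'p fm" where
  "maxf ts K = Conj (good ts K)
     (bigconj (map (\<lambda>L. Imp (Conj (Box (Imp (info ts K) (info ts L)))
                                  (Dia (Conj (Neg (info ts K)) (info ts L))))
                             (Neg (good ts L)))
                   (subseqs [0..<length ts])))"

definition state :: "'p dnf \<Rightarrow> nat list \<Rightarrow> 'p fm" where
  "state os S = Conj (bigconj (map (\<lambda>s. fst (os ! s)) S))
     (bigconj (map (\<lambda>s. Neg (fst (os ! s))) (filter (\<lambda>s. s \<notin> set S) [0..<length os])))"

definition star :: "'p dnf \<Rightarrow> 'p dnf \<Rightarrow> 'p fm" where
  "star ts os = bigconj (map (\<lambda>K.
      Imp (maxf ts K)
        (Box (Imp (info ts K)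
          (bigconj (map (\<lambda>S.
             Imp (state os S)
               (bigdisj (map (\<lambda>s. Conj (Box (Imp (info ts K) (fst (snd (os ! s)))))
                                       (bigconj (map (\<lambda>g. Dia (Conj (info ts K) g)) (snd (snd (os ! s))))))
                          S)))
             (subseqs [0..<length os]))))))
    (subseqs [0..<length ts]))"

primrec dagger :: "('p fm \<Rightarrow> 'p dnf) \<Rightarrow> 'p fm \<Rightarrow> 'p fm" where
  "dagger nf (Atom p) = Atom p"
| "dagger nf (Neg a) = Neg (dagger nf a)"
| "dagger nf (Conj a b) = Conj (dagger nf a) (dagger nf b)"
| "dagger nf (Box a) = Box (dagger nf a)"
| "dagger nf (Cond a b) = star (nf (dagger nf a)) (nf (dagger nf b))"

end

theory Submission
  imports Defs
begin

lemma sat_bigconj: "sat V w X (bigconj l) = (\<forall>x\<in>set l. sat V w X x)"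
  by (induction l rule: bigconj.induct) (auto simp: Top_def Bot_def)

lemma sat_bigdisj: "sat V w X (bigdisj l) = (\<exists>x\<in>set l. sat V w X x)"
  by (induction l rule: bigdisj.induct) (auto simp: Or_def Bot_def)

lemma sat_Imp[simp]: "sat V w X (Imp a b) = (sat V w X a \<longrightarrow> sat V w X b)"
  by (simp add: Imp_def)
lemma sat_Or[simp]: "sat V w X (Or a b) = (sat V w X a \<or> sat V w X b)"
  by (simp add: Or_def)
lemma sat_Iff[simp]: "sat V w X (Iff a b) = (sat V w X a \<longleftrightarrow> sat V w X b)"
  by (auto simp add: Iff_def)
lemma sat_Dia[simp]: "sat V w X (Dia a) = (\<exists>v\<in>X. sat V v X a)"
  by (simp add: Dia_def)

lemma nonmodal_sat: "nonmodal f \<Longrightarrow> sat V v Y f = sat V v Z f"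
  by (induction f) auto

definition nms where "nms V u f = sat V u {} f"

lemma nms_eq: "nonmodal f \<Longrightarrow> sat V u Y f = nms V u f"
  unfolding nms_def by (rule nonmodal_sat)

lemma peval_sat: "peval (sat V w X) a = sat V w X a"
  by (induction a) auto

lemma K45_sound: "K45 a \<Longrightarrow> \<forall>w X. sat V w X a"
proof (induction rule: K45.induct)
  case (Taut a) then show ?case using peval_sat[of V] by (auto simp: taut_def)
qed auto

lemma in_L_bigconj: "(\<forall>x\<in>set l. in_L x) \<Longrightarrow> in_L (bigconj l)"
  by (induction l rule: bigconj.induct) (auto simp: Top_def Bot_def)
lemma in_L_bigdisj: "(\<forall>x\<in>set l. in_L x) \<Longrightarrow> in_L (bigdisj l)"
  by (induction l rule: bigdisj.induct) (auto simp: Or_def Bot_def)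
lemma nonmodal_bigconj: "(\<forall>x\<in>set l. nonmodal x) \<Longrightarrow> nonmodal (bigconj l)"
  by (induction l rule: bigconj.induct) (auto simp: Top_def Bot_def)
lemma nonmodal_bigdisj: "(\<forall>x\<in>set l. nonmodal x) \<Longrightarrow> nonmodal (bigdisj l)"
  by (induction l rule: bigdisj.induct) (auto simp: Or_def Bot_def)
lemma nonmodal_in_L: "nonmodal f \<Longrightarrow> in_L f"
  by (induction f) auto

lemma subseqs_set: "K \<in> set (subseqs xs) \<Longrightarrow> set K \<subseteq> set xs"
proof -
  assume "K \<in> set (subseqs xs)"
  then have "set K \<in> set ` set (subseqs xs)" by (rule imageI)
  then show ?thesis unfolding subseqs_powset by simp
qed
lemma subseqs_ex: "A \<subseteq> set xs \<Longrightarrow> \<exists>K\<in>set (subseqs xs). set K = A"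
proof -
  assume "A \<subseteq> set xs"
  then have "A \<in> set ` set (subseqs xs)" unfolding subseqs_powset by simp
  then show ?thesis by (auto simp: image_iff)
qed

lemma dnf_nm:
  assumes "dnf_nonmodal ts" "k < length ts"
  shows "nonmodal (fst (ts!k))" "nonmodal (fst (snd (ts!k)))" "\<forall>c\<in>set (snd (snd (ts!k))). nonmodal c"
proof -
  have m: "ts!k \<in> set ts" using assms(2) by simp
  obtain a b c where e: "ts!k = (a,b,c)" by (cases "ts!k") auto
  have "nonmodal a \<and> nonmodal b \<and> (\<forall>x\<in>set c. nonmodal x)"
    using assms(1) m e unfolding dnf_nonmodal_def by fastforce
  then show "nonmodal (fst (ts!k))" "nonmodal (fst (snd (ts!k)))" "\<forall>c\<in>set (snd (snd (ts!k))). nonmodal c"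
    using e by auto
qed

lemma sat_dnf: "sat V w X (dnf_fm ds) = (\<exists>d\<in>set ds. sat V w X (fst d) \<and> (\<forall>v\<in>X. sat V v X (fst (snd d)))
   \<and> (\<forall>c\<in>set (snd (snd d)). \<exists>v\<in>X. sat V v X c))"
  by (simp add: dnf_fm_def sat_bigdisj sat_bigconj disjunct_fm_def split_beta)

lemma info_nm: "dnf_nonmodal ts \<Longrightarrow> K \<in> set (subseqs [0..<length ts]) \<Longrightarrow> nonmodal (info ts K)"
  using subseqs_set[of K "[0..<length ts]"] dnf_nm[of ts]
  by (auto simp: info_def intro!: nonmodal_bigconj nonmodal_bigdisj) (meson atLeastLessThan_iff subsetD)+

lemma sat_info: "sat V v Y (info ts K) = ((\<exists>k\<in>set K. sat V v Y (fst (ts!k))) \<and> (\<forall>k\<in>set K. sat V v Y (fst (snd (ts!k)))))"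
  by (auto simp: info_def sat_bigconj sat_bigdisj)

lemma sat_good: "sat V w Y (good ts K) = (\<forall>k\<in>set K. \<forall>c\<in>set (snd (snd (ts!k))). \<exists>v\<in>Y. sat V v Y (info ts K) \<and> sat V v Y c)"
  by (auto simp: good_def sat_bigconj)

lemma subseqs_lt: "K \<in> set (subseqs [0..<n]) \<Longrightarrow> k \<in> set K \<Longrightarrow> k < n"
  using subseqs_set[of K "[0..<n]"] by auto

lemma ii_char:
  assumes nm: "dnf_nonmodal ts"
  shows "(\<forall>v\<in>Y. sat V v Y (dnf_fm ts)) \<longleftrightarrow>
    (\<exists>K\<in>set (subseqs [0..<length ts]). (\<forall>v\<in>Y. sat V v Y (info ts K)) \<and> sat V w Y (good ts K))"
proof
  assume H: "\<forall>v\<in>Y. sat V v Y (dnf_fm ts)"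
  define A where "A = {i \<in> set [0..<length ts]. (\<forall>v\<in>Y. sat V v Y (fst (snd (ts!i)))) \<and>
      (\<forall>c\<in>set (snd (snd (ts!i))). \<exists>v\<in>Y. sat V v Y c)}"
  have As: "A \<subseteq> set [0..<length ts]" unfolding A_def by blast
  obtain K where K: "K \<in> set (subseqs [0..<length ts])" "set K = A"
    using subseqs_ex[OF As] by blast
  have KA: "\<And>k. k \<in> set K \<Longrightarrow> (\<forall>v\<in>Y. sat V v Y (fst (snd (ts!k)))) \<and>
      (\<forall>c\<in>set (snd (snd (ts!k))). \<exists>v\<in>Y. sat V v Y c)"
    unfolding K(2) A_def by simp
  have inf: "\<forall>v\<in>Y. sat V v Y (info ts K)"
  proof
    fix v assume v: "v \<in> Y"
    then have "sat V v Y (dnf_fm ts)" using H by simp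
    then obtain d where d: "d \<in> set ts" "sat V v Y (fst d)" "\<forall>v\<in>Y. sat V v Y (fst (snd d))"
      "\<forall>c\<in>set (snd (snd d)). \<exists>v\<in>Y. sat V v Y c" unfolding sat_dnf by blast
    from d(1) obtain i where i: "i < length ts" "ts!i = d" by (auto simp: in_set_conv_nth)
    have iK: "i \<in> set K" unfolding K(2) A_def using i d(3,4) by simp
    have "\<exists>k\<in>set K. sat V v Y (fst (ts!k))" using iK i(2) d(2) by blast
    moreover have "\<forall>k\<in>set K. sat V v Y (fst (snd (ts!k)))" using KA v by blast
    ultimately show "sat V v Y (info ts K)" unfolding sat_info by blast
  qed
  have "sat V w Y (good ts K)" unfolding sat_good
  proof (intro ballI)
    fix k c assume k: "k \<in> set K" and c: "c \<in> set (snd (snd (ts!k)))"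
    then obtain v where "v \<in> Y" "sat V v Y c" using KA by blast
    then show "\<exists>v\<in>Y. sat V v Y (info ts K) \<and> sat V v Y c" using inf by blast
  qed
  then show "\<exists>K\<in>set (subseqs [0..<length ts]). (\<forall>v\<in>Y. sat V v Y (info ts K)) \<and> sat V w Y (good ts K)"
    using K(1) inf by blast
next
  assume "\<exists>K\<in>set (subseqs [0..<length ts]). (\<forall>v\<in>Y. sat V v Y (info ts K)) \<and> sat V w Y (good ts K)"
  then obtain K where K: "K \<in> set (subseqs [0..<length ts])" "\<forall>v\<in>Y. sat V v Y (info ts K)" "sat V w Y (good ts K)"
    by blast
  show "\<forall>v\<in>Y. sat V v Y (dnf_fm ts)"
  proof
    fix v assume v: "v \<in> Y"
    then have "sat V v Y (info ts K)" using K(2) by blast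
    then obtain k where k: "k \<in> set K" "sat V v Y (fst (ts!k))" unfolding sat_info by blast
    have kl: "k < length ts" using subseqs_lt[OF K(1) k(1)] .
    have "\<forall>u\<in>Y. sat V u Y (fst (snd (ts!k)))"
    proof
      fix u assume "u \<in> Y"
      then have "sat V u Y (info ts K)" using K(2) by blast
      then show "sat V u Y (fst (snd (ts!k)))" unfolding sat_info using k(1) by blast
    qed
    moreover have "\<forall>c\<in>set (snd (snd (ts!k))). \<exists>u\<in>Y. sat V u Y c"
      using K(3) k(1) unfolding sat_good by blast
    moreover have "ts!k \<in> set ts" using kl by simp
    ultimately show "sat V v Y (dnf_fm ts)" unfolding sat_dnf using k(2) by blast
  qed
qed

lemma good_IK:
  assumes nm: "dnf_nonmodal ts" and K: "K \<in> set (subseqs [0..<length ts])"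
  shows "sat V w X (good ts K) \<longleftrightarrow> sat V w' {u\<in>X. sat V u X (info ts K)} (good ts K)"
proof -
  have I: "\<And>u Y. sat V u Y (info ts K) = nms V u (info ts K)"
    by (rule nms_eq[OF info_nm[OF nm K]])
  have C: "\<And>k c u Y. k \<in> set K \<Longrightarrow> c \<in> set (snd (snd (ts!k))) \<Longrightarrow> sat V u Y c = nms V u c"
    by (rule nms_eq) (use dnf_nm(3)[OF nm subseqs_lt[OF K]] in blast)
  have "(\<exists>v\<in>X. sat V v X (info ts K) \<and> sat V v X c) \<longleftrightarrow>
     (\<exists>v\<in>{u\<in>X. sat V u X (info ts K)}. sat V v {u\<in>X. sat V u X (info ts K)} (info ts K) \<and>
       sat V v {u\<in>X. sat V u X (info ts K)} c)" if "k \<in> set K" "c \<in> set (snd (snd (ts!k)))" for k c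
    unfolding I C[OF that] by auto
  then show ?thesis unfolding sat_good by simp
qed

lemma sat_maxf: "sat V w X (maxf ts K) \<longleftrightarrow> sat V w X (good ts K) \<and>
   (\<forall>L\<in>set (subseqs [0..<length ts]). (\<forall>u\<in>X. sat V u X (info ts K) \<longrightarrow> sat V u X (info ts L)) \<and>
      (\<exists>u\<in>X. \<not> sat V u X (info ts K) \<and> sat V u X (info ts L)) \<longrightarrow> \<not> sat V w X (good ts L))"
  by (simp add: maxf_def sat_bigconj)

lemma good_w: "sat V w X (good ts K) = sat V w' X (good ts K)"
  unfolding sat_good by simp

lemma good_mono:
  assumes nm: "dnf_nonmodal ts" and K: "K \<in> set (subseqs [0..<length ts])"
    and Y: "Y \<subseteq> X" and g: "sat V w Y (good ts K)"
  shows "sat V w' X (good ts K)"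
proof -
  have I: "\<And>u Y. sat V u Y (info ts K) = nms V u (info ts K)"
    by (rule nms_eq[OF info_nm[OF nm K]])
  show ?thesis unfolding sat_good
  proof (intro ballI)
    fix k c assume k: "k \<in> set K" and c: "c \<in> set (snd (snd (ts!k)))"
    have C: "\<And>u Y. sat V u Y c = nms V u c"
      by (rule nms_eq) (use dnf_nm(3)[OF nm subseqs_lt[OF K k]] c in blast)
    obtain v where "v \<in> Y" "sat V v Y (info ts K)" "sat V v Y c" using g k c unfolding sat_good by blast
    then show "\<exists>v\<in>X. sat V v X (info ts K) \<and> sat V v X c" using Y unfolding I C by blast
  qed
qed

lemma max_char:
  assumes nm: "dnf_nonmodal ts"
  shows "(X' \<subseteq> X \<and> (\<forall>v\<in>X'. sat V v X' (dnf_fm ts)) \<and>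
           \<not> (\<exists>X''. X'' \<subseteq> X \<and> (\<forall>v\<in>X''. sat V v X'' (dnf_fm ts)) \<and> X' \<subset> X''))
     \<longleftrightarrow> (\<exists>K\<in>set (subseqs [0..<length ts]). sat V w X (maxf ts K) \<and> X' = {u\<in>X. sat V u X (info ts K)})"
  (is "?L \<longleftrightarrow> ?R")
proof
  assume L: ?L
  have QX': "\<forall>v\<in>X'. sat V v X' (dnf_fm ts)" using L by (rule conjE) (erule conjE)
  have X'X: "X' \<subseteq> X" using L by (rule conjE)
  have nmax: "\<not> (\<exists>X''. X'' \<subseteq> X \<and> (\<forall>v\<in>X''. sat V v X'' (dnf_fm ts)) \<and> X' \<subset> X'')"
    using L by (rule conjE) (erule conjE)
  obtain K where K: "K \<in> set (subseqs [0..<length ts])" "\<forall>v\<in>X'. sat V v X' (info ts K)" "sat V w X' (good ts K)"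
    using ii_char[OF nm, where Y=X' and V=V and w=w, THEN iffD1, OF QX'] by blast
  have I: "\<And>u Y. sat V u Y (info ts K) = nms V u (info ts K)"
    by (rule nms_eq[OF info_nm[OF nm K(1)]])
  define Z where "Z = {u\<in>X. sat V u X (info ts K)}"
  have ZX: "Z \<subseteq> X" unfolding Z_def by blast
  have gX: "sat V w X (good ts K)" by (rule good_mono[OF nm K(1) X'X K(3)])
  have gZ: "sat V w Z (good ts K)" unfolding Z_def using good_IK[OF nm K(1), where V=V and w=w and X=X and w'=w] gX by simp
  have iZ: "\<forall>v\<in>Z. sat V v Z (info ts K)" unfolding Z_def I by simp
  have QZ: "\<forall>v\<in>Z. sat V v Z (dnf_fm ts)"
    using ii_char[OF nm, where Y=Z and V=V and w=w, THEN iffD2] K(1) gZ iZ by blast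
  have sub: "X' \<subseteq> Z" unfolding Z_def using X'X K(2) unfolding I by auto
  have "\<not> X' \<subset> Z" using nmax QZ ZX by blast
  then have eq: "X' = Z" using sub by blast
  have "sat V w X (maxf ts K)" unfolding sat_maxf
  proof (intro conjI gX ballI impI)
    fix Lx assume Lx: "Lx \<in> set (subseqs [0..<length ts])"
      and H: "(\<forall>u\<in>X. sat V u X (info ts K) \<longrightarrow> sat V u X (info ts Lx)) \<and>
              (\<exists>u\<in>X. \<not> sat V u X (info ts K) \<and> sat V u X (info ts Lx))"
    have IL: "\<And>u Y. sat V u Y (info ts Lx) = nms V u (info ts Lx)"
      by (rule nms_eq[OF info_nm[OF nm Lx]])
    show "\<not> sat V w X (good ts Lx)"
    proof
      assume gL: "sat V w X (good ts Lx)"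
      define Z' where "Z' = {u\<in>X. sat V u X (info ts Lx)}"
      have Z'X: "Z' \<subseteq> X" unfolding Z'_def by blast
      have gZ': "sat V w Z' (good ts Lx)" unfolding Z'_def using good_IK[OF nm Lx, where V=V and w=w and X=X and w'=w] gL by simp
      have iZ': "\<forall>v\<in>Z'. sat V v Z' (info ts Lx)" unfolding Z'_def IL by simp
      have QZ': "\<forall>v\<in>Z'. sat V v Z' (dnf_fm ts)"
        using ii_char[OF nm, where Y=Z' and V=V and w=w, THEN iffD2] Lx gZ' iZ' by blast
      have H': "(\<forall>u\<in>X. nms V u (info ts K) \<longrightarrow> nms V u (info ts Lx)) \<and>
              (\<exists>u\<in>X. \<not> nms V u (info ts K) \<and> nms V u (info ts Lx))" using H unfolding I IL .
      have "X' \<subset> Z'" unfolding eq Z_def Z'_def I IL using H' by auto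
      then show False using nmax QZ' Z'X by blast
    qed
  qed
  then show ?R using K(1) eq unfolding Z_def by blast
next
  assume ?R
  then obtain K where K: "K \<in> set (subseqs [0..<length ts])" "sat V w X (maxf ts K)" "X' = {u\<in>X. sat V u X (info ts K)}"
    by blast
  have I: "\<And>u Y. sat V u Y (info ts K) = nms V u (info ts K)"
    by (rule nms_eq[OF info_nm[OF nm K(1)]])
  have gX: "sat V w X (good ts K)" using K(2) unfolding sat_maxf by (rule conjunct1)
  have gZ: "sat V w X' (good ts K)" unfolding K(3) using good_IK[OF nm K(1), where V=V and w=w and X=X and w'=w] gX by simp
  have iX': "\<forall>v\<in>X'. sat V v X' (info ts K)" unfolding K(3) I by simp
  have QX': "\<forall>v\<in>X'. sat V v X' (dnf_fm ts)"
    using ii_char[OF nm, where Y=X' and V=V and w=w, THEN iffD2] K(1) gZ iX' by blast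
  have "\<not> (\<exists>X''. X'' \<subseteq> X \<and> (\<forall>v\<in>X''. sat V v X'' (dnf_fm ts)) \<and> X' \<subset> X'')"
  proof
    assume "\<exists>X''. X'' \<subseteq> X \<and> (\<forall>v\<in>X''. sat V v X'' (dnf_fm ts)) \<and> X' \<subset> X''"
    then obtain X'' where X'': "X'' \<subseteq> X" "\<forall>v\<in>X''. sat V v X'' (dnf_fm ts)" "X' \<subset> X''" by blast
    obtain Lx where Lx: "Lx \<in> set (subseqs [0..<length ts])" "\<forall>v\<in>X''. sat V v X'' (info ts Lx)" "sat V w X'' (good ts Lx)"
      using ii_char[OF nm, where Y=X'' and V=V and w=w, THEN iffD1, OF X''(2)] by blast
    have IL: "\<And>u Y. sat V u Y (info ts Lx) = nms V u (info ts Lx)"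
      by (rule nms_eq[OF info_nm[OF nm Lx(1)]])
    have gL: "sat V w X (good ts Lx)" by (rule good_mono[OF nm Lx(1) X''(1) Lx(3)])
    have iL: "\<forall>v\<in>X''. nms V v (info ts Lx)" using Lx(2) unfolding IL .
    have sub3: "X' \<subset> X''" by (rule X''(3))
    have H': "(\<forall>u\<in>X. nms V u (info ts K) \<longrightarrow> nms V u (info ts Lx)) \<and>
              (\<exists>u\<in>X. \<not> nms V u (info ts K) \<and> nms V u (info ts Lx))"
      using X''(1) iL sub3 unfolding K(3) I by auto
    have H: "(\<forall>u\<in>X. sat V u X (info ts K) \<longrightarrow> sat V u X (info ts Lx)) \<and>
              (\<exists>u\<in>X. \<not> sat V u X (info ts K) \<and> sat V u X (info ts Lx))"
      unfolding I IL by (rule H')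
    have "\<not> sat V w X (good ts Lx)" using K(2) Lx(1) H unfolding sat_maxf by blast
    then show False using gL by blast
  qed
  then show ?L using QX' K(3) by blast
qed


lemma sat_state: "sat V v X (state os S) \<longleftrightarrow> (\<forall>s\<in>set S. sat V v X (fst (os!s))) \<and>
   (\<forall>s<length os. s \<notin> set S \<longrightarrow> \<not> sat V v X (fst (os!s)))"
  by (auto simp: state_def sat_bigconj)

lemma bex_set_nth: "(\<exists>d\<in>set xs. Q d) = (\<exists>j<length xs. Q (xs!j))"
  by (auto simp: in_set_conv_nth) (use nth_mem in blast)

lemma D_lemma:
  assumes nm: "dnf_nonmodal os" and nI: "nonmodal I" and v: "v \<in> X" "sat V v X I"
  shows "sat V v {u\<in>X. sat V u X I} (dnf_fm os) \<longleftrightarrow>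
    (\<forall>S\<in>set (subseqs [0..<length os]). sat V v X (state os S) \<longrightarrow>
       (\<exists>s\<in>set S. (\<forall>u\<in>X. sat V u X I \<longrightarrow> sat V u X (fst (snd (os!s)))) \<and>
          (\<forall>g\<in>set (snd (snd (os!s))). \<exists>u\<in>X. sat V u X I \<and> sat V u X g)))"
  (is "?L \<longleftrightarrow> ?R")
proof -
  define Z where "Z = {u\<in>X. sat V u X I}"
  define P where "P j \<longleftrightarrow> (\<forall>u\<in>X. sat V u X I \<longrightarrow> sat V u X (fst (snd (os!j)))) \<and>
          (\<forall>g\<in>set (snd (snd (os!j))). \<exists>u\<in>X. sat V u X I \<and> sat V u X g)" for j
  have II: "\<And>u Y. sat V u Y I = nms V u I" by (rule nms_eq[OF nI])
  have step1: "?L \<longleftrightarrow> (\<exists>j<length os. sat V v X (fst (os!j)) \<and> P j)"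
  proof -
    have eqj: "(sat V v Z (fst (os!j)) \<and> (\<forall>u\<in>Z. sat V u Z (fst (snd (os!j)))) \<and>
         (\<forall>c\<in>set (snd (snd (os!j))). \<exists>u\<in>Z. sat V u Z c)) \<longleftrightarrow> sat V v X (fst (os!j)) \<and> P j"
      if j: "j < length os" for j
    proof -
      have A1: "\<And>u Y. sat V u Y (fst (os!j)) = nms V u (fst (os!j))" by (rule nms_eq[OF dnf_nm(1)[OF nm j]])
      have A2: "\<And>u Y. sat V u Y (fst (snd (os!j))) = nms V u (fst (snd (os!j)))" by (rule nms_eq[OF dnf_nm(2)[OF nm j]])
      have A3: "\<And>c u Y. c \<in> set (snd (snd (os!j))) \<Longrightarrow> sat V u Y c = nms V u c"
        by (rule nms_eq) (use dnf_nm(3)[OF nm j] in blast)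
      have "(\<forall>c\<in>set (snd (snd (os!j))). \<exists>u\<in>Z. sat V u Z c) \<longleftrightarrow>
            (\<forall>g\<in>set (snd (snd (os!j))). \<exists>u\<in>X. sat V u X I \<and> sat V u X g)"
      proof (intro ball_cong refl)
        fix c assume c: "c \<in> set (snd (snd (os!j)))"
        show "(\<exists>u\<in>Z. sat V u Z c) \<longleftrightarrow> (\<exists>u\<in>X. sat V u X I \<and> sat V u X c)"
          unfolding Z_def A3[OF c] II by auto
      qed
      moreover have "(\<forall>u\<in>Z. sat V u Z (fst (snd (os!j)))) \<longleftrightarrow> (\<forall>u\<in>X. sat V u X I \<longrightarrow> sat V u X (fst (snd (os!j))))"
        unfolding Z_def A2 II by auto
      moreover have "sat V v Z (fst (os!j)) = sat V v X (fst (os!j))" unfolding A1 ..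
      ultimately show ?thesis unfolding P_def by blast
    qed
    have "?L \<longleftrightarrow> (\<exists>d\<in>set os. sat V v Z (fst d) \<and> (\<forall>u\<in>Z. sat V u Z (fst (snd d))) \<and>
         (\<forall>c\<in>set (snd (snd d)). \<exists>u\<in>Z. sat V u Z c))" unfolding Z_def sat_dnf ..
    also have "\<dots> \<longleftrightarrow> (\<exists>j<length os. sat V v Z (fst (os!j)) \<and> (\<forall>u\<in>Z. sat V u Z (fst (snd (os!j)))) \<and>
         (\<forall>c\<in>set (snd (snd (os!j))). \<exists>u\<in>Z. sat V u Z c))" by (rule bex_set_nth)
    also have "\<dots> \<longleftrightarrow> (\<exists>j<length os. sat V v X (fst (os!j)) \<and> P j)" using eqj by blast
    finally show ?thesis .
  qed
  have step2: "?R \<longleftrightarrow> (\<forall>S\<in>set (subseqs [0..<length os]). sat V v X (state os S) \<longrightarrow> (\<exists>s\<in>set S. P s))"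
    unfolding P_def ..
  have step3: "(\<forall>S\<in>set (subseqs [0..<length os]). sat V v X (state os S) \<longrightarrow> (\<exists>s\<in>set S. P s))
     \<longleftrightarrow> (\<exists>j<length os. sat V v X (fst (os!j)) \<and> P j)"
  proof
    assume H: "\<forall>S\<in>set (subseqs [0..<length os]). sat V v X (state os S) \<longrightarrow> (\<exists>s\<in>set S. P s)"
    have sub: "{j. j < length os \<and> sat V v X (fst (os!j))} \<subseteq> set [0..<length os]" by auto
    obtain S where S: "S \<in> set (subseqs [0..<length os])" "set S = {j. j < length os \<and> sat V v X (fst (os!j))}"
      using subseqs_ex[OF sub] by blast
    have "sat V v X (state os S)" unfolding sat_state S(2) by simp
    then obtain s where "s \<in> set S" "P s" using H S(1) by blast
    then show "\<exists>j<length os. sat V v X (fst (os!j)) \<and> P j" using S(2) by blast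
  next
    assume "\<exists>j<length os. sat V v X (fst (os!j)) \<and> P j"
    then obtain j where j: "j < length os" "sat V v X (fst (os!j))" "P j" by blast
    show "\<forall>S\<in>set (subseqs [0..<length os]). sat V v X (state os S) \<longrightarrow> (\<exists>s\<in>set S. P s)"
    proof (intro ballI impI)
      fix S assume "S \<in> set (subseqs [0..<length os])" "sat V v X (state os S)"
      then have "j \<in> set S" using j unfolding sat_state by blast
      then show "\<exists>s\<in>set S. P s" using j(3) by blast
    qed
  qed
  show ?thesis using step1 step2 step3 by blast
qed

lemma sat_star: "sat V w X (star ts os) \<longleftrightarrow> (\<forall>K\<in>set (subseqs [0..<length ts]). sat V w X (maxf ts K) \<longrightarrow>
   (\<forall>v\<in>X. sat V v X (info ts K) \<longrightarrow>
     (\<forall>S\<in>set (subseqs [0..<length os]). sat V v X (state os S) \<longrightarrow>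
       (\<exists>s\<in>set S. (\<forall>u\<in>X. sat V u X (info ts K) \<longrightarrow> sat V u X (fst (snd (os!s)))) \<and>
          (\<forall>g\<in>set (snd (snd (os!s))). \<exists>u\<in>X. sat V u X (info ts K) \<and> sat V u X g)))))"
  by (simp add: star_def sat_bigconj sat_bigdisj)

lemma subset_Collect_self: "(Y \<subseteq> {v\<in>Y. P v}) = (\<forall>v\<in>Y. P v)" by blast

lemma cond_star:
  assumes nt: "dnf_nonmodal ts" and no: "dnf_nonmodal os"
    and A: "\<And>v Y. sat V v Y a = sat V v Y (dnf_fm ts)"
    and B: "\<And>v Y. sat V v Y b = sat V v Y (dnf_fm os)"
  shows "sat V w X (Cond a b) = sat V w X (star ts os)"
proof -
  let ?M = "\<lambda>X'. X' \<subseteq> X \<and> (\<forall>v\<in>X'. sat V v X' (dnf_fm ts)) \<and>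
           \<not> (\<exists>X''. X'' \<subseteq> X \<and> (\<forall>v\<in>X''. sat V v X'' (dnf_fm ts)) \<and> X' \<subset> X'')"
  have "sat V w X (Cond a b) \<longleftrightarrow> (\<forall>X'. ?M X' \<longrightarrow> (\<forall>v\<in>X'. sat V v X' (dnf_fm os)))"
    by (simp only: sat.simps A B subset_Collect_self)
  also have "\<dots> \<longleftrightarrow> (\<forall>K\<in>set (subseqs [0..<length ts]). sat V w X (maxf ts K) \<longrightarrow>
      (\<forall>v\<in>{u\<in>X. sat V u X (info ts K)}. sat V v {u\<in>X. sat V u X (info ts K)} (dnf_fm os)))"
  proof
    assume H: "\<forall>X'. ?M X' \<longrightarrow> (\<forall>v\<in>X'. sat V v X' (dnf_fm os))"
    show "\<forall>K\<in>set (subseqs [0..<length ts]). sat V w X (maxf ts K) \<longrightarrow>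
      (\<forall>v\<in>{u\<in>X. sat V u X (info ts K)}. sat V v {u\<in>X. sat V u X (info ts K)} (dnf_fm os))"
    proof (rule ballI, rule impI)
      fix K assume K: "K \<in> set (subseqs [0..<length ts])" "sat V w X (maxf ts K)"
      have "?M {u\<in>X. sat V u X (info ts K)}"
        using max_char[OF nt, where X=X and X'="{u\<in>X. sat V u X (info ts K)}" and V=V and w=w] K by blast
      then show "\<forall>v\<in>{u\<in>X. sat V u X (info ts K)}. sat V v {u\<in>X. sat V u X (info ts K)} (dnf_fm os)"
        using H by blast
    qed
  next
    assume H: "\<forall>K\<in>set (subseqs [0..<length ts]). sat V w X (maxf ts K) \<longrightarrow>
      (\<forall>v\<in>{u\<in>X. sat V u X (info ts K)}. sat V v {u\<in>X. sat V u X (info ts K)} (dnf_fm os))"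
    show "\<forall>X'. ?M X' \<longrightarrow> (\<forall>v\<in>X'. sat V v X' (dnf_fm os))"
    proof (intro allI impI)
      fix X' assume "?M X'"
      then obtain K where K: "K \<in> set (subseqs [0..<length ts])" "sat V w X (maxf ts K)"
         "X' = {u\<in>X. sat V u X (info ts K)}"
        using max_char[OF nt, where X=X and X'=X' and V=V and w=w, THEN iffD1] by blast
      show "\<forall>v\<in>X'. sat V v X' (dnf_fm os)" unfolding K(3) using H K(1,2) by blast
    qed
  qed
  also have "\<dots> \<longleftrightarrow> sat V w X (star ts os)"
    unfolding sat_star
  proof (rule ball_cong[OF refl], rule imp_cong[OF refl])
    fix K assume K: "K \<in> set (subseqs [0..<length ts])"
    show "(\<forall>v\<in>{u\<in>X. sat V u X (info ts K)}. sat V v {u\<in>X. sat V u X (info ts K)} (dnf_fm os)) \<longleftrightarrow>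
       (\<forall>v\<in>X. sat V v X (info ts K) \<longrightarrow>
     (\<forall>S\<in>set (subseqs [0..<length os]). sat V v X (state os S) \<longrightarrow>
       (\<exists>s\<in>set S. (\<forall>u\<in>X. sat V u X (info ts K) \<longrightarrow> sat V u X (fst (snd (os!s)))) \<and>
          (\<forall>g\<in>set (snd (snd (os!s))). \<exists>u\<in>X. sat V u X (info ts K) \<and> sat V u X g))))"
    proof
      assume H: "\<forall>v\<in>{u\<in>X. sat V u X (info ts K)}. sat V v {u\<in>X. sat V u X (info ts K)} (dnf_fm os)"
      show "\<forall>v\<in>X. sat V v X (info ts K) \<longrightarrow>
     (\<forall>S\<in>set (subseqs [0..<length os]). sat V v X (state os S) \<longrightarrow>
       (\<exists>s\<in>set S. (\<forall>u\<in>X. sat V u X (info ts K) \<longrightarrow> sat V u X (fst (snd (os!s)))) \<and>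
          (\<forall>g\<in>set (snd (snd (os!s))). \<exists>u\<in>X. sat V u X (info ts K) \<and> sat V u X g)))"
      proof (rule ballI, rule impI)
        fix v assume v: "v \<in> X" "sat V v X (info ts K)"
        have "sat V v {u\<in>X. sat V u X (info ts K)} (dnf_fm os)" using H v by blast
        then show "\<forall>S\<in>set (subseqs [0..<length os]). sat V v X (state os S) \<longrightarrow>
         (\<exists>s\<in>set S. (\<forall>u\<in>X. sat V u X (info ts K) \<longrightarrow> sat V u X (fst (snd (os!s)))) \<and>
            (\<forall>g\<in>set (snd (snd (os!s))). \<exists>u\<in>X. sat V u X (info ts K) \<and> sat V u X g))"
          using D_lemma[OF no info_nm[OF nt K] v] by blast
      qed
    next
      assume H: "\<forall>v\<in>X. sat V v X (info ts K) \<longrightarrow>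
     (\<forall>S\<in>set (subseqs [0..<length os]). sat V v X (state os S) \<longrightarrow>
       (\<exists>s\<in>set S. (\<forall>u\<in>X. sat V u X (info ts K) \<longrightarrow> sat V u X (fst (snd (os!s)))) \<and>
          (\<forall>g\<in>set (snd (snd (os!s))). \<exists>u\<in>X. sat V u X (info ts K) \<and> sat V u X g)))"
      show "\<forall>v\<in>{u\<in>X. sat V u X (info ts K)}. sat V v {u\<in>X. sat V u X (info ts K)} (dnf_fm os)"
      proof (rule ballI)
        fix v assume v0: "v \<in> {u\<in>X. sat V u X (info ts K)}"
        have v: "v \<in> X" "sat V v X (info ts K)" using v0 by auto
        show "sat V v {u\<in>X. sat V u X (info ts K)} (dnf_fm os)"
          using D_lemma[OF no info_nm[OF nt K] v] H v by blast
      qed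
    qed
  qed
  finally show ?thesis .
qed


lemma in_L_Imp[simp]: "in_L (Imp a b) = (in_L a \<and> in_L b)" by (simp add: Imp_def)
lemma in_L_Dia[simp]: "in_L (Dia a) = in_L a" by (simp add: Dia_def)

lemma in_L_comp:
  assumes "dnf_nonmodal ts" "K \<in> set (subseqs [0..<length ts])" "k \<in> set K"
  shows "in_L (fst (ts!k))" "in_L (fst (snd (ts!k)))" "c \<in> set (snd (snd (ts!k))) \<Longrightarrow> in_L c"
  using dnf_nm[OF assms(1) subseqs_lt[OF assms(2,3)]] nonmodal_in_L by auto

lemma in_L_info: "dnf_nonmodal ts \<Longrightarrow> K \<in> set (subseqs [0..<length ts]) \<Longrightarrow> in_L (info ts K)"
  by (rule nonmodal_in_L[OF info_nm])

lemma in_L_good: "dnf_nonmodal ts \<Longrightarrow> K \<in> set (subseqs [0..<length ts]) \<Longrightarrow> in_L (good ts K)"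
  unfolding good_def by (auto intro!: in_L_bigconj in_L_info) (meson in_L_comp(3))

lemma in_L_maxf: "dnf_nonmodal ts \<Longrightarrow> K \<in> set (subseqs [0..<length ts]) \<Longrightarrow> in_L (maxf ts K)"
  unfolding maxf_def by (auto intro!: in_L_bigconj in_L_info in_L_good)

lemma in_L_state: "dnf_nonmodal os \<Longrightarrow> S \<in> set (subseqs [0..<length os]) \<Longrightarrow> in_L (state os S)"
  unfolding state_def by (auto intro!: in_L_bigconj intro: in_L_comp(1)) (meson dnf_nm(1) nonmodal_in_L)

lemma in_L_star: "dnf_nonmodal ts \<Longrightarrow> dnf_nonmodal os \<Longrightarrow> in_L (star ts os)"
  unfolding star_def
  apply (auto intro!: in_L_bigconj in_L_bigdisj in_L_maxf in_L_info in_L_state)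
   apply (rule in_L_comp(2); assumption)
  apply (rule in_L_comp(3); assumption)
  done

theorem theorem12:
  fixes nf :: "'p fm \<Rightarrow> 'p dnf" and \<delta> :: "'p fm"
  assumes "is_NF nf"
  shows "in_L (dagger nf \<delta>) \<and>
    (\<forall>(W :: 'w set) V w X. W \<noteq> {} \<and> (\<forall>p. V p \<subseteq> W) \<and> w \<in> W \<and> X \<subseteq> W \<longrightarrow>
        (sat V w X \<delta> \<longleftrightarrow> sat V w X (dagger nf \<delta>)))"
proof -
  have NF: "\<And>chi :: 'p fm. in_L chi \<Longrightarrow> dnf_nonmodal (nf chi)"
    "\<And>(chi :: 'p fm) (V :: 'p \<Rightarrow> 'w set) w X. in_L chi \<Longrightarrow> sat V w X chi = sat V w X (dnf_fm (nf chi))"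
  proof -
    fix chi :: "'p fm" assume "in_L chi"
    then show "dnf_nonmodal (nf chi)" using assms unfolding is_NF_def by blast
  next
    fix chi :: "'p fm" and V :: "'p \<Rightarrow> 'w set" and w X assume "in_L chi"
    then have "K45 (Iff chi (dnf_fm (nf chi)))" using assms unfolding is_NF_def by blast
    then have "sat V w X (Iff chi (dnf_fm (nf chi)))" using K45_sound[where V=V] by blast
    then show "sat V w X chi = sat V w X (dnf_fm (nf chi))" by simp
  qed
  have "in_L (dagger nf \<delta>) \<and> (\<forall>(V :: 'p \<Rightarrow> 'w set) w X. sat V w X \<delta> \<longleftrightarrow> sat V w X (dagger nf \<delta>))"
  proof (induction \<delta>)
    case (Cond a b)
    have La: "in_L (dagger nf a)" and Lb: "in_L (dagger nf b)" using Cond.IH by blast+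
    have nt: "dnf_nonmodal (nf (dagger nf a))" by (rule NF(1)[OF La])
    have no: "dnf_nonmodal (nf (dagger nf b))" by (rule NF(1)[OF Lb])
    have "sat V w X (Cond a b) \<longleftrightarrow> sat V w X (dagger nf (Cond a b))" for V :: "'p \<Rightarrow> 'w set" and w X
    proof -
      have A: "\<And>v Y. sat V v Y a = sat V v Y (dnf_fm (nf (dagger nf a)))"
        using Cond.IH(1) NF(2)[OF La] by blast
      have B: "\<And>v Y. sat V v Y b = sat V v Y (dnf_fm (nf (dagger nf b)))"
        using Cond.IH(2) NF(2)[OF Lb] by blast
      show ?thesis using cond_star[OF nt no A B] by simp
    qed
    then show ?case using in_L_star[OF nt no] by simp
  qed auto
  then show ?thesis by blast
qed

end
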